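(* Let $\mathcal{M}\subseteq\mathbb{F}_{q^n}^{2\times2}$ be a matrix field isomorphic to $\mathbb{F}_{q^t}$, where $1\le t\le n$ and $t$ divides $n$. If $\mathcal{M}$ contains a nonsingular matrix, then there exist $P\in\mathrm{GL}(2,q^n)$ and $\sigma\in\mathrm{Aut}(\mathbb{F}_{q^t})$ such that \[P\mathcal{M}P^{-1}=\left\{\begin{pmatrix}x&0\\0&x^\sigma\end{pmatrix}\colon x\in\mathbb{F}_{q^t}\right\}.\] In addition, if $\mathrm{diag}(x,x)\in\mathcal{M}$ for every $x\in\mathbb{F}_q$, then $\sigma\in\mathrm{Gal}(\mathbb{F}_{q^t}|\mathbb{F}_q)$.
   Context: $q$ is a prime power and $n\ge1$. A matrix field in $\mathbb{F}_{q^n}^{2\times2}$ is a subset which is a field with respect to the matrix addition and multiplication inherited from $\mathbb{F}_{q^n}^{2\times2}$ (its identity element need not be the identity matrix). *)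

theory Defs
  imports "HOL-Analysis.Determinants" "HOL-Algebra.QuotRing" "HOL-Computational_Algebra.Primes"
begin

text \<open>A matrix field: a subset of the 2x2 matrices that is a field w.r.t. the inherited
  matrix addition and multiplication (zero and identity are whatever elements of M
  serve as such; in particular the identity need not be the identity matrix).\<close>
definition matrix_field_ring :: "('a::field^2^2) set \<Rightarrow> 'a^2^2 \<Rightarrow> 'a^2^2 \<Rightarrow> ('a^2^2) ring" where
  "matrix_field_ring M z e = \<lparr>carrier = M, monoid.mult = (**), one = e, zero = z, add = (+)\<rparr>"

definition is_matrix_field :: "('a::field^2^2) set \<Rightarrow> bool" where
  "is_matrix_field M \<longleftrightarrow> (\<exists>z e. field (matrix_field_ring M z e))"

text \<open>The subfield of a field 'a consisting of the roots of X^m - X (for CARD('a) = q^n and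
  m = q^t with t dvd n, this is the unique subfield F_{q^t}).\<close>
definition roots_field :: "nat \<Rightarrow> 'a::field set" where
  "roots_field m = {x. x ^ m = x}"

definition subfield_ring :: "'a::field set \<Rightarrow> 'a ring" where
  "subfield_ring S = \<lparr>carrier = S, monoid.mult = (*), one = 1, zero = 0, add = (+)\<rparr>"

definition diag2 :: "'a::zero \<Rightarrow> 'a \<Rightarrow> 'a^2^2" where
  "diag2 x y = (\<chi> i j. if i = j then (if i = 1 then x else y) else 0)"

end

theory Submission imports Defs "HOL-Computational_Algebra.Polynomial" begin


lemma fermat_field:
  fixes x :: "'a::{finite,field}"
  shows "x ^ CARD('a) = x"
proof (cases "x = 0")
  case True
  have "CARD('a) > 0" by simp
  then show ?thesis using True by (simp add: power_0_left)
next
  case False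
  define S where "S = (UNIV::'a set) - {0}"
  have fin: "finite S" by simp
  have img: "(\<lambda>y. x * y) ` S = S"
  proof
    show "(\<lambda>y. x * y) ` S \<subseteq> S" using False by (auto simp: S_def)
    show "S \<subseteq> (\<lambda>y. x * y) ` S"
    proof
      fix y assume "y \<in> S"
      then have "y = x * (y / x)" "y / x \<in> S" using False by (auto simp: S_def)
      then show "y \<in> (\<lambda>y. x * y) ` S" by blast
    qed
  qed
  have inj: "inj_on (\<lambda>y. x * y) S" using False by (auto simp: inj_on_def)
  have "prod id S = prod id ((\<lambda>y. x * y) ` S)" using img by simp
  also have "\<dots> = (\<Prod>y\<in>S. x * y)" using prod.reindex[OF inj, of id] by simp
  also have "\<dots> = x ^ card S * prod id S" by (simp add: prod.distrib)
  finally have e: "prod id S = x ^ card S * prod id S" .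
  have "prod id S \<noteq> 0" using fin by (simp add: S_def)
  then have "x ^ card S = 1" using e by (metis mult_cancel_right1)
  moreover have "card S = CARD('a) - 1" by (simp add: S_def card_Diff_singleton)
  moreover have "CARD('a) = Suc (CARD('a) - 1)" by simp
  ultimately show ?thesis by (metis power_Suc mult_1_right)
qed



fun mpow :: "'a::semiring_1^2^2 \<Rightarrow> nat \<Rightarrow> 'a^2^2" where
  "mpow B 0 = mat 1"
| "mpow B (Suc k) = mpow B k ** B"

fun ab :: "'a::comm_ring_1 \<Rightarrow> 'a \<Rightarrow> nat \<Rightarrow> 'a \<times> 'a" where
  "ab \<tau> \<delta> 0 = (1, 0)"
| "ab \<tau> \<delta> (Suc k) = (- snd (ab \<tau> \<delta> k) * \<delta>, fst (ab \<tau> \<delta> k) + snd (ab \<tau> \<delta> k) * \<tau>)"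

lemma mpow_ab:
  fixes B :: "'a::comm_ring_1^2^2"
  assumes "\<tau> = B$1$1 + B$2$2" "\<delta> = B$1$1 * B$2$2 - B$1$2 * B$2$1"
  shows "mpow B k = (\<chi> i j. (if i = j then fst (ab \<tau> \<delta> k) else 0) + snd (ab \<tau> \<delta> k) * B$i$j)"
proof (induction k)
  case 0
  then show ?case by (simp add: vec_eq_iff mat_def)
next
  case (Suc k)
  show ?case
    apply (simp only: mpow.simps Suc)
    apply (simp add: vec_eq_iff forall_2 matrix_matrix_mult_def sum_2 assms)
    apply (simp add: algebra_simps)
    done
qed

lemma poly_ab:
  fixes \<tau> \<delta> :: "'a::comm_ring_1"
  shows "\<exists>Q. monom 1 k = Q * [:\<delta>, -\<tau>, 1:] + [:fst (ab \<tau> \<delta> k), snd (ab \<tau> \<delta> k):]"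
proof (induction k)
  case 0
  show ?case by (rule exI[of _ 0]) (simp add: monom_0 one_pCons)
next
  case (Suc k)
  then obtain Q where Q: "monom 1 k = Q * [:\<delta>, -\<tau>, 1:] + [:fst (ab \<tau> \<delta> k), snd (ab \<tau> \<delta> k):]" by blast
  define a where "a = fst (ab \<tau> \<delta> k)"
  define b where "b = snd (ab \<tau> \<delta> k)"
  have "monom (1::'a) (Suc k) = [:0,1:] * monom 1 k"
    by (simp add: monom_Suc)
  also have "\<dots> = ([:0,1:] * Q + [:b:]) * [:\<delta>, -\<tau>, 1:] + [:- b * \<delta>, a + b * \<tau>:]"
    unfolding Q a_def[symmetric] b_def[symmetric]
    by (simp add: algebra_simps)
  finally have "monom (1::'a) (Suc k) = ([:0,1:] * Q + [:b:]) * [:\<delta>, -\<tau>, 1:] + [:- b * \<delta>, a + b * \<tau>:]" .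
  then show ?case unfolding ab.simps fst_conv snd_conv a_def b_def by blast
qed

lemma eig:
  fixes B :: "'a::{finite,field}^2^2"
  assumes ns: "B$1$2 \<noteq> 0 \<or> B$2$1 \<noteq> 0 \<or> B$1$1 \<noteq> B$2$2"
    and fermat: "\<And>x::'a. x ^ CARD('a) = x"
    and pw: "mpow B CARD('a) = B"
  shows "\<exists>r1 r2. r1 \<noteq> r2 \<and> r1 * r1 - (B$1$1 + B$2$2) * r1 + (B$1$1 * B$2$2 - B$1$2 * B$2$1) = 0
                 \<and> r2 * r2 - (B$1$1 + B$2$2) * r2 + (B$1$1 * B$2$2 - B$1$2 * B$2$1) = 0"
proof -
  define \<tau> where "\<tau> = B$1$1 + B$2$2"
  define \<delta> where "\<delta> = B$1$1 * B$2$2 - B$1$2 * B$2$1"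
  define N where "N = CARD('a)"
  define a where "a = fst (ab \<tau> \<delta> N)"
  define b where "b = snd (ab \<tau> \<delta> N)"
  have eq: "(\<chi> i j. (if i = j then a else 0) + b * B$i$j) = B"
  proof -
    have "mpow B N = B" by (simp add: pw N_def)
    then show ?thesis unfolding mpow_ab[OF \<tau>_def \<delta>_def] a_def b_def .
  qed
  have e11: "a + b * B$1$1 = B$1$1" using arg_cong[OF eq, of "\<lambda>A. A$1$1"] by simp
  have e22: "a + b * B$2$2 = B$2$2" using arg_cong[OF eq, of "\<lambda>A. A$2$2"] by simp
  have e12: "b * B$1$2 = B$1$2" using arg_cong[OF eq, of "\<lambda>A. A$1$2"] by simp
  have e21: "b * B$2$1 = B$2$1" using arg_cong[OF eq, of "\<lambda>A. A$2$1"] by simp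
  have b1: "b = 1"
  proof -
    { assume "B$1$2 \<noteq> 0" then have ?thesis using e12 by simp }
    moreover
    { assume "B$2$1 \<noteq> 0" then have ?thesis using e21 by simp }
    moreover
    { assume h: "B$1$1 \<noteq> B$2$2"
      have x1: "b * B$1$1 = B$1$1 - a" using e11 by (simp add: eq_diff_eq add.commute)
      have x2: "b * B$2$2 = B$2$2 - a" using e22 by (simp add: eq_diff_eq add.commute)
      have "b * (B$1$1 - B$2$2) = 1 * (B$1$1 - B$2$2)" by (simp add: right_diff_distrib x1 x2)
      then have ?thesis using h by (simp only: mult_cancel_right) simp }
    ultimately show ?thesis using ns by blast
  qed
  have a0: "a = 0" using e11 b1 by simp
  obtain Q where Q: "monom 1 N = Q * [:\<delta>, -\<tau>, 1:] + [:a, b:]"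
    using poly_ab[of N \<delta> \<tau>] unfolding a_def b_def by blast
  have N2: "N \<ge> 2"
  proof -
    have "card {0::'a, 1} \<le> N" unfolding N_def by (rule card_mono) auto
    then show ?thesis by simp
  qed
  have QX: "monom 1 N - [:0, 1:] = Q * [:\<delta>, -\<tau>, 1:]" using Q a0 b1 by simp
  have Qnz: "Q \<noteq> 0"
  proof
    assume "Q = 0"
    then have "coeff (monom (1::'a) N) N = coeff [:0, 1:] N" using QX by simp
    then show False using N2 by (simp add: coeff_pCons split: nat.splits)
  qed
  have chinz: "[:\<delta>, -\<tau>, 1::'a:] \<noteq> 0" by simp
  have "degree Q + 2 = degree (Q * [:\<delta>, -\<tau>, 1:])"
    by (simp only: degree_mult_eq[OF Qnz chinz]) simp
  also have "\<dots> = degree (monom (1::'a) N - [:0, 1:])" using QX by simp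
  also have "\<dots> \<le> N"
    using degree_diff_le[of "monom (1::'a) N" N "[:0,1:]"] N2 by (simp add: degree_monom_eq)
  finally have degQ: "degree Q + 2 \<le> N" .
  define S where "S = {x. poly [:\<delta>, -\<tau>, 1:] x = (0::'a)}"
  have sub: "- S \<subseteq> {x. poly Q x = 0}"
  proof
    fix x assume "x \<in> - S"
    then have h: "poly [:\<delta>, -\<tau>, 1:] x \<noteq> 0" by (simp add: S_def)
    have "poly (monom 1 N - [:0, 1:]) x = 0" using fermat[of x] by (simp add: poly_monom N_def)
    then have "poly (Q * [:\<delta>, -\<tau>, 1:]) x = 0" by (simp only: QX)
    then have "poly Q x * poly [:\<delta>, -\<tau>, 1:] x = 0" by (simp only: poly_mult)
    then show "x \<in> {x. poly Q x = 0}" using h by (simp only: mult_eq_0_iff mem_Collect_eq) blast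
  qed
  have "card (- S) \<le> degree Q"
    using card_mono[OF _ sub] card_poly_roots_bound[OF Qnz] by (meson finite le_trans)
  moreover have "card (- S) = N - card S" unfolding N_def
    by (simp add: Compl_eq_Diff_UNIV card_Diff_subset)
  moreover have "card S \<le> N" unfolding N_def by (simp add: card_mono)
  ultimately have cS: "card S \<ge> 2" using degQ by linarith
  then obtain r1 where r1: "r1 \<in> S" by fastforce
  have "card (S - {r1}) \<ge> 1" using cS r1 by (simp add: card_Diff_singleton)
  then have "S - {r1} \<noteq> {}" by (metis card.empty not_one_le_zero)
  then obtain r2 where r2: "r2 \<in> S - {r1}" by blast
  have chi: "poly [:\<delta>, -\<tau>, 1:] x = x * x - (B$1$1 + B$2$2) * x + (B$1$1 * B$2$2 - B$1$2 * B$2$1)" for x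
    by (simp add: \<tau>_def \<delta>_def algebra_simps)
  show ?thesis using r1 r2 unfolding S_def chi by blast
qed



definition mk2 :: "'a \<Rightarrow> 'a \<Rightarrow> 'a \<Rightarrow> 'a \<Rightarrow> 'a^2^2" where
  "mk2 a b c d = (\<chi> i j. if i = 1 then (if j = 1 then a else b) else (if j = 1 then c else d))"

lemma mk2_simps [simp]:
  "mk2 a b c d $ 1 $ 1 = a" "mk2 a b c d $ 1 $ 2 = b" "mk2 a b c d $ 2 $ 1 = c" "mk2 a b c d $ 2 $ 2 = d"
  by (simp_all add: mk2_def)

lemma diag2_simps [simp]:
  "diag2 a d $ 1 $ 1 = a" "diag2 a d $ 1 $ 2 = 0" "diag2 a d $ 2 $ 1 = 0" "diag2 a d $ 2 $ 2 = d"
  by (simp_all add: diag2_def)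

lemma mat1_simps [simp]:
  "(mat 1 :: 'a::zero_neq_one^2^2) $ 1 $ 1 = 1" "(mat 1 :: 'a^2^2) $ 1 $ 2 = 0"
  "(mat 1 :: 'a^2^2) $ 2 $ 1 = 0" "(mat 1 :: 'a^2^2) $ 2 $ 2 = 1"
  by (simp_all add: mat_def)

lemma mat2_eq_iff: "(A::'a^2^2) = B \<longleftrightarrow> A$1$1 = B$1$1 \<and> A$1$2 = B$1$2 \<and> A$2$1 = B$2$1 \<and> A$2$2 = B$2$2"
  by (auto simp: vec_eq_iff forall_2)

lemma mmul2 [simp]:
  fixes A B :: "'a::semiring_1^2^2"
  shows "(A ** B) $ 1 $ 1 = A$1$1 * B$1$1 + A$1$2 * B$2$1"
    "(A ** B) $ 1 $ 2 = A$1$1 * B$1$2 + A$1$2 * B$2$2"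
    "(A ** B) $ 2 $ 1 = A$2$1 * B$1$1 + A$2$2 * B$2$1"
    "(A ** B) $ 2 $ 2 = A$2$1 * B$1$2 + A$2$2 * B$2$2"
  by (simp_all add: matrix_matrix_mult_def sum_2)

lemma inv2:
  fixes Q :: "'a::field^2^2"
  assumes d: "Q$1$1 * Q$2$2 - Q$1$2 * Q$2$1 \<noteq> 0"
  defines "P \<equiv> mk2 (Q$2$2 / (Q$1$1 * Q$2$2 - Q$1$2 * Q$2$1)) (- Q$1$2 / (Q$1$1 * Q$2$2 - Q$1$2 * Q$2$1))
                    (- Q$2$1 / (Q$1$1 * Q$2$2 - Q$1$2 * Q$2$1)) (Q$1$1 / (Q$1$1 * Q$2$2 - Q$1$2 * Q$2$1))"
  shows "P ** Q = mat 1" "Q ** P = mat 1"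
proof -
  define d where "d = Q$1$1 * Q$2$2 - Q$1$2 * Q$2$1"
  have dd: "d \<noteq> 0" using assms d_def by simp
  have P: "P = mk2 (Q$2$2 / d) (- Q$1$2 / d) (- Q$2$1 / d) (Q$1$1 / d)" unfolding P_def d_def ..
  show "P ** Q = mat 1" "Q ** P = mat 1" unfolding P mat2_eq_iff using dd
    by (simp_all add: divide_simps) (simp_all add: d_def algebra_simps)
qed

lemma diag_from_eigen:
  fixes B :: "'a::field^2^2"
  assumes "P ** Q = mat 1" "B ** Q = Q ** diag2 r1 r2"
  shows "P ** B ** Q = diag2 r1 r2"
proof -
  have "P ** B ** Q = P ** (B ** Q)" by (simp add: matrix_mul_assoc)
  also have "\<dots> = (P ** Q) ** diag2 r1 r2" by (simp add: assms matrix_mul_assoc)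
  finally show ?thesis using assms by simp
qed

lemma diag_ex:
  fixes B :: "'a::field^2^2"
  assumes ns: "B$1$2 \<noteq> 0 \<or> B$2$1 \<noteq> 0 \<or> B$1$1 \<noteq> B$2$2"
    and rr: "r1 \<noteq> r2"
    and c1: "r1 * r1 - (B$1$1 + B$2$2) * r1 + (B$1$1 * B$2$2 - B$1$2 * B$2$1) = 0"
    and c2: "r2 * r2 - (B$1$1 + B$2$2) * r2 + (B$1$1 * B$2$2 - B$1$2 * B$2$1) = 0"
  shows "\<exists>P Q d1 d2. P ** Q = mat 1 \<and> Q ** P = mat 1 \<and> P ** B ** Q = diag2 d1 d2 \<and> d1 \<noteq> d2"
proof -
  have c1': "r1 * r1 = (B$1$1 + B$2$2) * r1 - (B$1$1 * B$2$2 - B$1$2 * B$2$1)" using c1 by (simp add: algebra_simps)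
  have c2': "r2 * r2 = (B$1$1 + B$2$2) * r2 - (B$1$1 * B$2$2 - B$1$2 * B$2$1)" using c2 by (simp add: algebra_simps)
  consider (a) "B$1$2 \<noteq> 0" | (b) "B$1$2 = 0" "B$2$1 \<noteq> 0" | (c) "B$1$2 = 0" "B$2$1 = 0" "B$1$1 \<noteq> B$2$2"
    using ns by blast
  then show ?thesis
  proof cases
    case a
    define Q where "Q = mk2 (B$1$2) (B$1$2) (r1 - B$1$1) (r2 - B$1$1)"
    have d: "Q$1$1 * Q$2$2 - Q$1$2 * Q$2$1 \<noteq> 0"
    proof -
      have "Q$1$1 * Q$2$2 - Q$1$2 * Q$2$1 = B$1$2 * (r2 - r1)" by (simp add: Q_def algebra_simps)
      then show ?thesis using a rr by simp
    qed
    have e: "B ** Q = Q ** diag2 r1 r2"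
      unfolding mat2_eq_iff by (simp add: Q_def algebra_simps c1' c2')
    show ?thesis using inv2[OF d] diag_from_eigen[OF inv2(1)[OF d] e] rr by blast
  next
    case b
    define Q where "Q = mk2 (r1 - B$2$2) (r2 - B$2$2) (B$2$1) (B$2$1)"
    have d: "Q$1$1 * Q$2$2 - Q$1$2 * Q$2$1 \<noteq> 0"
    proof -
      have "Q$1$1 * Q$2$2 - Q$1$2 * Q$2$1 = B$2$1 * (r1 - r2)" by (simp add: Q_def algebra_simps)
      then show ?thesis using b rr by simp
    qed
    have e: "B ** Q = Q ** diag2 r1 r2"
      unfolding mat2_eq_iff by (simp add: Q_def algebra_simps c1' c2')
    show ?thesis using inv2[OF d] diag_from_eigen[OF inv2(1)[OF d] e] rr by blast
  next
    case c
    have "mat 1 ** B ** mat 1 = diag2 (B$1$1) (B$2$2)" using c unfolding mat2_eq_iff by simp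
    then show ?thesis using c by (intro exI[of _ "mat 1"] exI[of _ "mat 1"]) auto
  qed
qed

lemma comm_diag:
  fixes B C P Q :: "'a::field^2^2"
  assumes PQ: "P ** Q = mat 1" and QP: "Q ** P = mat 1" and D: "P ** B ** Q = diag2 d1 d2" and dd: "d1 \<noteq> d2"
    and CB: "C ** B = B ** C"
  shows "(P ** C ** Q) $ 1 $ 2 = 0 \<and> (P ** C ** Q) $ 2 $ 1 = 0"
proof -
  define C' where "C' = P ** C ** Q"
  have "C' ** diag2 d1 d2 = P ** C ** (Q ** P) ** B ** Q" unfolding C'_def D[symmetric] by (simp add: matrix_mul_assoc)
  also have "\<dots> = P ** (C ** B) ** Q" by (simp add: QP matrix_mul_assoc)
  also have "\<dots> = P ** (B ** C) ** Q" by (simp add: CB)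
  also have "\<dots> = P ** B ** (Q ** P) ** C ** Q" by (simp add: QP matrix_mul_assoc)
  also have "\<dots> = diag2 d1 d2 ** C'" unfolding C'_def D[symmetric] by (simp add: matrix_mul_assoc)
  finally have e: "C' ** diag2 d1 d2 = diag2 d1 d2 ** C'" .
  have "C'$1$2 * d2 = d1 * C'$1$2" using arg_cong[OF e, of "\<lambda>A. A$1$2"] by simp
  then have "C'$1$2 * (d2 - d1) = 0" by (simp add: algebra_simps)
  moreover have "C'$2$1 * d1 = d2 * C'$2$1" using arg_cong[OF e, of "\<lambda>A. A$2$1"] by simp
  then have "C'$2$1 * (d2 - d1) = 0" by (auto simp: algebra_simps)
  ultimately show ?thesis using dd unfolding C'_def by (metis mult_eq_0_iff right_minus_eq)
qed



lemma mfr_simps [simp]: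
  "carrier (matrix_field_ring M z e) = M" "monoid.mult (matrix_field_ring M z e) = (**)"
  "one (matrix_field_ring M z e) = e" "zero (matrix_field_ring M z e) = z"
  "add (matrix_field_ring M z e) = (+)"
  by (simp_all add: matrix_field_ring_def)

lemma sfr_simps [simp]:
  "carrier (subfield_ring S) = S" "monoid.mult (subfield_ring S) = (*)"
  "one (subfield_ring S) = 1" "zero (subfield_ring S) = 0"
  "add (subfield_ring S) = (+)"
  by (simp_all add: subfield_ring_def)

lemma two_cases:
  fixes x :: 2
  obtains "x = 1" | "x = 2"
  using exhaust_2 by blast

lemma mpow_eq_pow:
  assumes "monoid (matrix_field_ring M z (mat 1))"
  shows "X [^]\<^bsub>matrix_field_ring M z (mat 1)\<^esub> (k::nat) = mpow X k"
  by (induction k) simp_all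

lemma conj_mult:
  fixes P Q X Y :: "'a::field^2^2"
  assumes "Q ** P = mat 1"
  shows "P ** (X ** Y) ** Q = (P ** X ** Q) ** (P ** Y ** Q)"
proof -
  have "(P ** X ** Q) ** (P ** Y ** Q) = P ** X ** (Q ** P) ** Y ** Q" by (simp add: matrix_mul_assoc)
  also have "\<dots> = P ** (X ** Y) ** Q" by (simp add: assms matrix_mul_assoc)
  finally show ?thesis by simp
qed

lemma conj_add:
  fixes P Q X Y :: "'a::field^2^2"
  shows "P ** (X + Y) ** Q = (P ** X ** Q) + (P ** Y ** Q)"
  by (simp add: mat2_eq_iff algebra_simps)

lemma conj_neg:
  fixes P Q X :: "'a::field^2^2"
  shows "P ** (- X) ** Q = - (P ** X ** Q)"
  by (simp add: mat2_eq_iff algebra_simps)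

lemma main_diag:
  fixes M :: "('a::{finite,field}^2^2) set" and P Q :: "'a^2^2"
  assumes fld: "field (matrix_field_ring M 0 (mat 1))"
    and h: "h \<in> ring_iso (matrix_field_ring M 0 (mat 1)) (subfield_ring (roots_field m :: 'a set))"
    and PQ: "P ** Q = mat 1" and QP: "Q ** P = mat 1"
    and dg: "\<forall>X\<in>M. (P ** X ** Q) $ 1 $ 2 = 0 \<and> (P ** X ** Q) $ 2 $ 1 = 0"
  shows "\<exists>\<sigma>. \<sigma> \<in> ring_iso (subfield_ring (roots_field m :: 'a set)) (subfield_ring (roots_field m))
           \<and> (\<lambda>A. P ** A ** Q) ` M = {diag2 x (\<sigma> x) | x. x \<in> roots_field m}
           \<and> (\<forall>x. diag2 x x \<in> M \<longrightarrow> \<sigma> x = x)"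
proof -
  define Rm where "Rm = matrix_field_ring M 0 (mat 1)"
  define R where "R = (roots_field m :: 'a set)"
  interpret F: field Rm using fld Rm_def by simp
  have mul_cl: "X ** Y \<in> M" if "X \<in> M" "Y \<in> M" for X Y
    using F.m_closed[of X Y] that by (simp add: Rm_def)
  have add_cl: "X + Y \<in> M" if "X \<in> M" "Y \<in> M" for X Y
    using F.a_closed[of X Y] that by (simp add: Rm_def)
  have one_cl: "mat 1 \<in> M" using F.one_closed by (simp add: Rm_def)
  have neg_cl: "- X \<in> M" if "X \<in> M" for X
  proof -
    have "X + a_inv Rm X = 0" using F.r_neg[of X] that by (simp add: Rm_def)
    then have "a_inv Rm X = - X" by (metis add_minus_cancel add.commute add_0)
    then show ?thesis using F.a_inv_closed[of X] that by (simp add: Rm_def)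
  qed
  have inv_ex: "\<exists>Y\<in>M. X ** Y = mat 1" if "X \<in> M" "X \<noteq> 0" for X
  proof -
    have "X \<in> Units Rm" using F.field_Units that by (simp add: Rm_def)
    then show ?thesis unfolding Units_def by (auto simp: Rm_def)
  qed
  have hh: "h \<in> ring_hom Rm (subfield_ring R)" and hb: "bij_betw h M R"
    using h by (simp_all add: ring_iso_def Rm_def R_def)
  have hmul: "h (X ** Y) = h X * h Y" if "X \<in> M" "Y \<in> M" for X Y
    using hh that unfolding ring_hom_def by (simp add: Rm_def)
  have hone: "h (mat 1) = 1" using hh unfolding ring_hom_def by (simp add: Rm_def)
  have finM: "finite M" by simp
  have finR: "finite R" by simp
  have cardMR: "card M = card R" using bij_betw_same_card[OF hb] .
  define \<phi> where "\<phi> i X = (P ** X ** Q) $ i $ i" for i :: 2 and X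
  have offd: "(P ** X ** Q) $ i $ j = 0" if "X \<in> M" "i \<noteq> j" for X i j
    using that dg by (cases i rule: two_cases; cases j rule: two_cases) auto
  have conjdiag: "P ** X ** Q = diag2 (\<phi> 1 X) (\<phi> 2 X)" if "X \<in> M" for X
    using offd[OF that, of 1 2] offd[OF that, of 2 1] unfolding mat2_eq_iff \<phi>_def by simp
  have phmul: "\<phi> i (X ** Y) = \<phi> i X * \<phi> i Y" if "X \<in> M" "Y \<in> M" for i X Y
  proof -
    have "\<phi> i (X ** Y) = (diag2 (\<phi> 1 X) (\<phi> 2 X) ** diag2 (\<phi> 1 Y) (\<phi> 2 Y)) $ i $ i"
      unfolding \<phi>_def[of i] conj_mult[OF QP] conjdiag[OF that(1)] conjdiag[OF that(2)] ..
    then show ?thesis by (cases i rule: two_cases) simp_all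
  qed
  have phadd: "\<phi> i (X + Y) = \<phi> i X + \<phi> i Y" for i X Y
    unfolding \<phi>_def conj_add by simp
  have phneg: "\<phi> i (- X) = - \<phi> i X" for i X
    unfolding \<phi>_def conj_neg by simp
  have phone: "\<phi> i (mat 1) = 1" for i
    using PQ unfolding \<phi>_def by (cases i rule: two_cases) simp_all
  have powR: "X [^]\<^bsub>Rm\<^esub> m = X" if "X \<in> M" for X
  proof -
    have hp: "h (X [^]\<^bsub>Rm\<^esub> (k::nat)) = h X ^ k" for k
    proof (induction k)
      case 0 then show ?case using hone by (simp add: Rm_def)
    next
      case (Suc k)
      have "X [^]\<^bsub>Rm\<^esub> k \<in> M" using F.nat_pow_closed[of X k] that by (simp add: Rm_def)
      then show ?case using Suc hmul[of "X [^]\<^bsub>Rm\<^esub> k" X] that by (simp add: Rm_def)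
    qed
    have "h X \<in> R" using hb that by (auto simp: bij_betw_def)
    then have "h X ^ m = h X" by (simp add: R_def roots_field_def)
    then have "h (X [^]\<^bsub>Rm\<^esub> m) = h X" using hp by simp
    moreover have "X [^]\<^bsub>Rm\<^esub> m \<in> M" using F.nat_pow_closed[of X m] that by (simp add: Rm_def)
    ultimately show ?thesis using hb that by (auto simp: bij_betw_def inj_on_def)
  qed
  have phpow: "\<phi> i (X [^]\<^bsub>Rm\<^esub> (k::nat)) = \<phi> i X ^ k" if "X \<in> M" for i X k
  proof (induction k)
    case 0 then show ?case using phone by (simp add: Rm_def)
  next
    case (Suc k)
    have "X [^]\<^bsub>Rm\<^esub> k \<in> M" using F.nat_pow_closed[of X k] that by (simp add: Rm_def)
    then show ?case using Suc phmul[of "X [^]\<^bsub>Rm\<^esub> k" X] that by (simp add: Rm_def)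
  qed
  have phR: "\<phi> i X \<in> R" if "X \<in> M" for i X
    using phpow[OF that, of i m] powR[OF that] by (simp add: R_def roots_field_def)
  have phinj: "inj_on (\<phi> i) M" for i
  proof (rule inj_onI)
    fix X Y assume XM: "X \<in> M" and YM: "Y \<in> M" and eq: "\<phi> i X = \<phi> i Y"
    define W where "W = X + - Y"
    have WM: "W \<in> M" using add_cl[OF XM neg_cl[OF YM]] by (simp add: W_def)
    have W0: "\<phi> i W = 0" using eq by (simp only: W_def phadd phneg) simp
    show "X = Y"
    proof (rule ccontr)
      assume "X \<noteq> Y"
      then have "W \<noteq> 0" by (simp add: W_def)
      then obtain V where VM: "V \<in> M" and WV: "W ** V = mat 1" using inv_ex[OF WM] by blast
      have "\<phi> i W * \<phi> i V = 1" using phmul[OF WM VM, of i] WV phone by simp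
      then show False using W0 by simp
    qed
  qed
  have phbij: "bij_betw (\<phi> i) M R" for i
  proof -
    have sub: "\<phi> i ` M \<subseteq> R" using phR by blast
    have "card (\<phi> i ` M) = card R" using card_image[OF phinj[of i]] cardMR by simp
    then have "\<phi> i ` M = R" using card_subset_eq[OF finR sub] by simp
    then show ?thesis using phinj[of i] by (simp add: bij_betw_def)
  qed
  define \<sigma> where "\<sigma> x = \<phi> 2 (inv_into M (\<phi> 1) x)" for x
  have sig_phi: "\<sigma> (\<phi> 1 X) = \<phi> 2 X" if "X \<in> M" for X
    using inv_into_f_f[OF phinj[of 1] that] by (simp add: \<sigma>_def)
  have Rphi: "\<exists>X\<in>M. x = \<phi> 1 X" if "x \<in> R" for x
    using phbij[of 1] that by (auto simp: bij_betw_def)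
  have sbij: "bij_betw \<sigma> R R"
  proof -
    have "bij_betw (inv_into M (\<phi> 1)) R M" using bij_betw_inv_into[OF phbij[of 1]] .
    moreover have "\<sigma> = \<phi> 2 \<circ> inv_into M (\<phi> 1)" by (rule ext) (simp add: \<sigma>_def)
    ultimately show ?thesis using bij_betw_trans[OF _ phbij[of 2]] by simp
  qed
  have shom: "\<sigma> \<in> ring_hom (subfield_ring R) (subfield_ring R)"
    unfolding ring_hom_def
  proof (intro CollectI conjI allI impI)
    show "\<sigma> \<in> carrier (subfield_ring R) \<rightarrow> carrier (subfield_ring R)"
      using sbij by (auto simp: bij_betw_def)
  next
    fix x y assume "x \<in> carrier (subfield_ring R) \<and> y \<in> carrier (subfield_ring R)"
    then have "x \<in> R" "y \<in> R" by auto
    then obtain X Y where XM: "X \<in> M" and YM: "Y \<in> M" and x: "x = \<phi> 1 X" and y: "y = \<phi> 1 Y"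
      using Rphi by meson
    have "\<sigma> (x * y) = \<sigma> (\<phi> 1 (X ** Y))" by (simp add: x y phmul XM YM)
    also have "\<dots> = \<phi> 2 (X ** Y)" using sig_phi mul_cl[OF XM YM] by simp
    also have "\<dots> = \<sigma> x * \<sigma> y" by (simp add: phmul XM YM x y sig_phi)
    finally show "\<sigma> (x \<otimes>\<^bsub>subfield_ring R\<^esub> y) = \<sigma> x \<otimes>\<^bsub>subfield_ring R\<^esub> \<sigma> y" by simp
    have "\<sigma> (x + y) = \<sigma> (\<phi> 1 (X + Y))" by (simp add: x y phadd)
    also have "\<dots> = \<phi> 2 (X + Y)" using sig_phi add_cl[OF XM YM] by simp
    also have "\<dots> = \<sigma> x + \<sigma> y" by (simp add: phadd XM YM x y sig_phi)
    finally show "\<sigma> (x \<oplus>\<^bsub>subfield_ring R\<^esub> y) = \<sigma> x \<oplus>\<^bsub>subfield_ring R\<^esub> \<sigma> y" by simp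
  next
    show "\<sigma> \<one>\<^bsub>subfield_ring R\<^esub> = \<one>\<^bsub>subfield_ring R\<^esub>"
      using sig_phi[OF one_cl] phone by simp
  qed
  have siso: "\<sigma> \<in> ring_iso (subfield_ring R) (subfield_ring R)"
    using shom sbij by (simp add: ring_iso_def)
  have img: "(\<lambda>A. P ** A ** Q) ` M = {diag2 x (\<sigma> x) | x. x \<in> R}"
  proof
    show "(\<lambda>A. P ** A ** Q) ` M \<subseteq> {diag2 x (\<sigma> x) | x. x \<in> R}"
    proof
      fix Y assume "Y \<in> (\<lambda>A. P ** A ** Q) ` M"
      then obtain X where XM: "X \<in> M" and Y: "Y = P ** X ** Q" by blast
      then have "Y = diag2 (\<phi> 1 X) (\<sigma> (\<phi> 1 X))" using conjdiag sig_phi by simp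
      then show "Y \<in> {diag2 x (\<sigma> x) | x. x \<in> R}" using phR[OF XM] by blast
    qed
    show "{diag2 x (\<sigma> x) | x. x \<in> R} \<subseteq> (\<lambda>A. P ** A ** Q) ` M"
    proof
      fix Y assume "Y \<in> {diag2 x (\<sigma> x) | x. x \<in> R}"
      then obtain x where xR: "x \<in> R" and Y: "Y = diag2 x (\<sigma> x)" by blast
      obtain X where XM: "X \<in> M" and x: "x = \<phi> 1 X" using Rphi[OF xR] by blast
      have "Y = P ** X ** Q" using conjdiag[OF XM] sig_phi[OF XM] by (simp add: Y x)
      then show "Y \<in> (\<lambda>A. P ** A ** Q) ` M" using XM by blast
    qed
  qed
  have fix_sc: "\<sigma> x = x" if "diag2 x x \<in> M" for x
  proof -
    have pq: "P$1$1 * Q$1$1 + P$1$2 * Q$2$1 = 1" "P$2$1 * Q$1$2 + P$2$2 * Q$2$2 = 1"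
      using PQ unfolding mat2_eq_iff by simp_all
    have c: "diag2 x x ** Q = Q ** diag2 x x" by (simp add: mat2_eq_iff mult.commute)
    have "P ** diag2 x x ** Q = P ** (diag2 x x ** Q)" by (simp add: matrix_mul_assoc)
    also have "\<dots> = (P ** Q) ** diag2 x x" by (simp add: c matrix_mul_assoc)
    finally have "P ** diag2 x x ** Q = diag2 x x" using PQ by simp
    then have "\<phi> 1 (diag2 x x) = x" "\<phi> 2 (diag2 x x) = x" by (simp_all add: \<phi>_def)
    then show ?thesis using sig_phi[OF that] by simp
  qed
  show ?thesis using siso img fix_sc unfolding R_def by blast
qed



theorem theorem3p13:
  fixes M :: "(('a::{finite,field})^2^2) set"
    and q n t :: nat
  assumes q_pp: "\<exists>p k. prime p \<and> k > 0 \<and> q = p ^ k"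
    and card_field: "CARD('a) = q ^ n"
    and t_ge: "1 \<le> t" and t_le: "t \<le> n" and t_dvd: "t dvd n"
    and mf: "\<exists>z e. field (matrix_field_ring M z e)
               \<and> matrix_field_ring M z e \<simeq> subfield_ring (roots_field (q ^ t) :: 'a set)"
    and nonsing: "\<exists>A\<in>M. det A \<noteq> 0"
  shows "\<exists>P \<sigma>. invertible P
           \<and> \<sigma> \<in> ring_iso (subfield_ring (roots_field (q ^ t)))
                           (subfield_ring (roots_field (q ^ t)))
           \<and> (\<lambda>A. P ** A ** matrix_inv P) ` M
               = {diag2 x (\<sigma> x) | x. x \<in> roots_field (q ^ t)}
           \<and> ((\<forall>x \<in> roots_field q. diag2 x x \<in> M)
               \<longrightarrow> (\<forall>x \<in> roots_field q. \<sigma> x = x))"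
proof -
  define m where "m = q ^ t"
  obtain z e where fld0: "field (matrix_field_ring M z e)"
    and iso0: "matrix_field_ring M z e \<simeq> subfield_ring (roots_field m :: 'a set)"
    using mf m_def by blast
  interpret F0: field "matrix_field_ring M z e" by (rule fld0)
  obtain A where AM: "A \<in> M" and detA: "det A \<noteq> 0" using nonsing by blast
  have e1: "e = mat 1"
  proof -
    have Ae: "A ** e = A" using F0.r_one[of A] AM by simp
    have "invertible A" using detA invertible_det_nz by blast
    then obtain A' where A'A: "A' ** A = mat 1" unfolding invertible_def by blast
    have "e = (A' ** A) ** e" using A'A by simp
    also have "\<dots> = A' ** A" by (simp add: Ae flip: matrix_mul_assoc)
    finally show ?thesis using A'A by simp
  qed
  have z0: "z = 0"
  proof -
    have "z + z = z" using F0.l_zero[of z] F0.zero_closed by simp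
    then show ?thesis by (metis add_cancel_right_right)
  qed
  define Rm where "Rm = matrix_field_ring M 0 (mat 1)"
  have fld: "field Rm" using fld0 e1 z0 by (simp add: Rm_def)
  interpret F: field Rm by (rule fld)
  obtain h where h: "h \<in> ring_iso Rm (subfield_ring (roots_field m :: 'a set))"
    using iso0 e1 z0 unfolding is_ring_iso_def Rm_def by blast
  have hh: "h \<in> ring_hom Rm (subfield_ring (roots_field m))" and hb: "bij_betw h M (roots_field m)"
    using h by (simp_all add: ring_iso_def Rm_def)
  have hmul: "h (X ** Y) = h X * h Y" if "X \<in> M" "Y \<in> M" for X Y
    using hh that unfolding ring_hom_def by (simp add: Rm_def)
  have hone: "h (mat 1) = 1" using hh unfolding ring_hom_def by (simp add: Rm_def)
  have powR: "X [^]\<^bsub>Rm\<^esub> m = X" if "X \<in> M" for X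
  proof -
    have hp: "h (X [^]\<^bsub>Rm\<^esub> (k::nat)) = h X ^ k" for k
    proof (induction k)
      case 0 then show ?case using hone by (simp add: Rm_def)
    next
      case (Suc k)
      have "X [^]\<^bsub>Rm\<^esub> k \<in> M" using F.nat_pow_closed[of X k] that by (simp add: Rm_def)
      then show ?case using Suc hmul[of "X [^]\<^bsub>Rm\<^esub> k" X] that by (simp add: Rm_def)
    qed
    have "h X \<in> roots_field m" using hb that by (auto simp: bij_betw_def)
    then have "h X ^ m = h X" by (simp add: roots_field_def)
    then have "h (X [^]\<^bsub>Rm\<^esub> m) = h X" using hp by simp
    moreover have "X [^]\<^bsub>Rm\<^esub> m \<in> M" using F.nat_pow_closed[of X m] that by (simp add: Rm_def)
    ultimately show ?thesis using hb that by (auto simp: bij_betw_def inj_on_def)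
  qed
  have powRj: "X [^]\<^bsub>Rm\<^esub> (m ^ j) = X" if "X \<in> M" for X j
  proof (induction j)
    case 0 then show ?case using that by (simp add: Rm_def)
  next
    case (Suc j)
    have "X [^]\<^bsub>Rm\<^esub> (m ^ Suc j) = (X [^]\<^bsub>Rm\<^esub> (m ^ j)) [^]\<^bsub>Rm\<^esub> m"
      using F.nat_pow_pow[of X "m ^ j" m] that by (simp add: Rm_def mult.commute)
    then show ?case using Suc powR[OF that] by simp
  qed
  have Nm: "CARD('a) = m ^ (n div t)"
    using card_field t_dvd by (simp add: m_def flip: power_mult)
  have mpN: "mpow X CARD('a) = X" if "X \<in> M" for X
  proof -
    have "monoid Rm" by (rule F.monoid_axioms)
    then have "X [^]\<^bsub>Rm\<^esub> CARD('a) = mpow X CARD('a)" unfolding Rm_def by (rule mpow_eq_pow)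
    then show ?thesis using powRj[OF that, of "n div t"] Nm by simp
  qed
  obtain P Q :: "'a^2^2" where PQ: "P ** Q = mat 1" and QP: "Q ** P = mat 1"
    and dg: "\<forall>X\<in>M. (P ** X ** Q) $ 1 $ 2 = 0 \<and> (P ** X ** Q) $ 2 $ 1 = 0"
  proof (cases "\<exists>B\<in>M. B$1$2 \<noteq> 0 \<or> B$2$1 \<noteq> 0 \<or> B$1$1 \<noteq> B$2$2")
    case True
    then obtain B where BM: "B \<in> M" and ns: "B$1$2 \<noteq> 0 \<or> B$2$1 \<noteq> 0 \<or> B$1$1 \<noteq> B$2$2" by blast
    obtain r1 r2 where rr: "r1 \<noteq> r2"
      and c1: "r1 * r1 - (B$1$1 + B$2$2) * r1 + (B$1$1 * B$2$2 - B$1$2 * B$2$1) = 0"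
      and c2: "r2 * r2 - (B$1$1 + B$2$2) * r2 + (B$1$1 * B$2$2 - B$1$2 * B$2$1) = 0"
      using eig[OF ns fermat_field mpN[OF BM]] by blast
    obtain P Q d1 d2 where PQ: "P ** Q = mat 1" and QP: "Q ** P = mat 1"
      and D: "P ** B ** Q = diag2 d1 d2" and dd: "d1 \<noteq> d2"
      using diag_ex[OF ns rr c1 c2] by blast
    have "\<forall>X\<in>M. (P ** X ** Q) $ 1 $ 2 = 0 \<and> (P ** X ** Q) $ 2 $ 1 = 0"
    proof
      fix X assume XM: "X \<in> M"
      have "X ** B = B ** X" using F.m_comm[of X B] XM BM by (simp add: Rm_def)
      then show "(P ** X ** Q) $ 1 $ 2 = 0 \<and> (P ** X ** Q) $ 2 $ 1 = 0"
        by (rule comm_diag[OF PQ QP D dd])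
    qed
    then show ?thesis using that PQ QP by blast
  next
    case False
    then have "\<forall>X\<in>M. (mat 1 ** X ** mat 1) $ 1 $ 2 = 0 \<and> (mat 1 ** X ** mat 1) $ 2 $ 1 = 0" by auto
    then show ?thesis using that[of "mat 1" "mat 1"] by simp
  qed
  obtain \<sigma> where siso: "\<sigma> \<in> ring_iso (subfield_ring (roots_field m :: 'a set)) (subfield_ring (roots_field m))"
    and img: "(\<lambda>A. P ** A ** Q) ` M = {diag2 x (\<sigma> x) | x. x \<in> roots_field m}"
    and fx: "\<forall>x. diag2 x x \<in> M \<longrightarrow> \<sigma> x = x"
    using main_diag[OF fld[unfolded Rm_def] h[unfolded Rm_def] PQ QP dg] by blast
  have invP: "invertible P" unfolding invertible_def using PQ QP by blast
  have mi: "P ** matrix_inv P = mat 1 \<and> matrix_inv P ** P = mat 1"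
    unfolding matrix_inv_def by (rule someI[of _ Q]) (simp add: PQ QP)
  have "Q = Q ** (P ** matrix_inv P)" using mi by simp
  also have "\<dots> = matrix_inv P" by (simp add: matrix_mul_assoc QP)
  finally have miQ: "matrix_inv P = Q" by simp
  show ?thesis
    apply (rule exI[of _ P], rule exI[of _ \<sigma>])
    using invP siso img fx unfolding miQ m_def by blast
qed

end
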